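(* Let $N\geq4$, $z\in\mathbb{C}\setminus\{0\}$, and let $|X_N(z)\rangle=|1\rangle^{\otimes N}+z^{N-1}\sqrt N\,|W_N\rangle$, where $|W_N\rangle=\frac{1}{\sqrt N}\left(|10\cdots0\rangle+|010\cdots0\rangle+\cdots+|0\cdots01\rangle\right)$. Then $|X_N(z)\rangle=\frac{1}{N-1}\sum_{k=1}^{N-1}|x_k\rangle^{\otimes N}$ with $|x_k\rangle=|1\rangle+e^{2\pi i(k-1)/(N-1)}z|0\rangle$, and $D(X_N(z))=N-1$.
   Context: The one-qubit space is $\mathbb{C}^2$ with standard basis $\{|0\rangle,|1\rangle\}$; $\mathrm{Sym}_N\subset(\mathbb{C}^2)^{\otimes N}$ is the symmetric subspace. For a nonzero $|\psi\rangle\in\mathrm{Sym}_N$, the optimal bond dimension $D(\psi)$ is the minimal integer $D\geq1$ such that $|\psi\rangle=\sum_{k=1}^D|x_k\rangle^{\otimes N}$ for some (not necessarily normalized) vectors $|x_k\rangle\in\mathbb{C}^2$. *)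

theory Defs
  imports Complex_Main
begin

text \<open>A one-qubit vector in C^2 is a function q :: bool => complex,
  with q False the coefficient of |0> and q True the coefficient of |1>.
  A vector of (C^2)^(tensor N) is a function v :: bool list => complex whose
  coefficient at the computational basis state |b_1 ... b_N> is v [b_1,...,b_N]
  (True = 1, False = 0); it vanishes on lists of length different from N.\<close>

type_synonym qubit = "bool \<Rightarrow> complex"
type_synonym nqubit = "bool list \<Rightarrow> complex"

definition ket0 :: qubit where "ket0 = (\<lambda>b. if b then 0 else 1)"
definition ket1 :: qubit where "ket1 = (\<lambda>b. if b then 1 else 0)"

definition tensor_power :: "nat \<Rightarrow> qubit \<Rightarrow> nqubit" where
  "tensor_power N x = (\<lambda>bs. if length bs = N then prod_list (map x bs) else 0)"

definition W_state :: "nat \<Rightarrow> nqubit" where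
  "W_state N = (\<lambda>bs. if length bs = N \<and> length (filter id bs) = 1
                      then complex_of_real (1 / sqrt (real N)) else 0)"

definition X_state :: "nat \<Rightarrow> complex \<Rightarrow> nqubit" where
  "X_state N z = (\<lambda>bs. tensor_power N ket1 bs
      + z ^ (N - 1) * complex_of_real (sqrt (real N)) * W_state N bs)"

definition bond_dim :: "nat \<Rightarrow> nqubit \<Rightarrow> nat" where
  "bond_dim N psi = (LEAST D. D \<ge> 1 \<and>
      (\<exists>x :: nat \<Rightarrow> qubit. psi = (\<lambda>bs. \<Sum>k\<in>{1..D}. tensor_power N (x k) bs)))"

end

theory Submission
  imports Defs "HOL-Analysis.Analysis" "HOL-Computational_Algebra.Polynomial"
begin

lemma sum_shift1: "(\<Sum>k\<in>{1..n}. f (k-1)) = (\<Sum>j<n. f j)" for f :: "nat \<Rightarrow> 'a::comm_monoid_add"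
  by (induction n) (auto simp: atLeastAtMostSuc_conv add.commute)

lemma zeta_one:
  fixes n m :: nat assumes n: "n \<ge> 1"
  shows "exp (2 * pi * \<i> * of_nat m/of_nat n) = 1 \<longleftrightarrow> n dvd m"
proof
  assume "n dvd m"
  then obtain q where q: "m = n * q" by auto
  have "exp (2 * pi * \<i> * of_nat m/of_nat n) = exp (of_nat q * (2 * of_real pi * \<i>))"
    using n by (simp add: q field_simps)
  also have "\<dots> = 1" by (simp only: exp_of_nat_mult exp_two_pi_i power_one)
  finally show "exp (2 * pi * \<i> * of_nat m/of_nat n) = 1" .
next
  assume "exp (2 * pi * \<i> * of_nat m/of_nat n) = 1"
  then obtain k :: int where k: "Im (2 * pi * \<i> * of_nat m/of_nat n) = of_int (2 * k) * pi"
    by (auto simp: exp_eq_1)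
  have "Im (2 * pi * \<i> * of_nat m/of_nat n) = 2 * pi * real m/real n"
    by (simp add: Im_divide_of_real[symmetric]) 
  with k have "2 * pi * real m/real n = 2 * real_of_int k * pi" by simp
  hence "real m = real n * real_of_int k" using n by (simp add: field_simps)
  hence "int m = int n * k" by (metis of_int_eq_iff of_int_mult of_int_of_nat_eq)
  thus "n dvd m" by (metis dvd_triv_left int_dvd_int_iff)
qed

lemma root_sum:
  fixes n m :: nat assumes n: "n \<ge> 1"
  shows "(\<Sum>k\<in>{1..n}. exp (2 * pi * \<i> * of_nat (k-1)/of_nat n)^m) = (if n dvd m then of_nat n else 0)"
proof -
  define \<zeta> where "\<zeta> = exp (2 * pi * \<i> * of_nat m/of_nat n)"
  have e: "exp (2 * pi * \<i> * of_nat j/of_nat n)^m = \<zeta>^j" for j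
  proof -
    have "exp (2 * pi * \<i> * of_nat j/of_nat n)^m = exp (of_nat m * (2 * pi * \<i> * of_nat j/of_nat n))"
      by (simp only: exp_of_nat_mult)
    also have "\<dots> = exp (of_nat j * (2 * pi * \<i> * of_nat m/of_nat n))" by (simp add: field_simps)
    also have "\<dots> = \<zeta>^j" by (simp only: exp_of_nat_mult \<zeta>_def)
    finally show ?thesis .
  qed
  have "(\<Sum>k\<in>{1..n}. exp (2 * pi * \<i> * of_nat (k-1)/of_nat n)^m) = (\<Sum>j<n. exp (2 * pi * \<i> * of_nat j/of_nat n)^m)"
    by (rule sum_shift1[of "\<lambda>j. exp (2 * pi * \<i> * of_nat j/of_nat n)^m" n])
  also have "\<dots> = (\<Sum>j<n. \<zeta>^j)" by (simp only: e)
  also have "\<dots> = (if n dvd m then of_nat n else 0)"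
  proof (cases "n dvd m")
    case True
    then have "\<zeta> = 1" using zeta_one[OF n] by (simp add: \<zeta>_def)
    then show ?thesis using True by simp
  next
    case False
    then have z1: "\<zeta> \<noteq> 1" using zeta_one[OF n] by (simp add: \<zeta>_def)
    have "\<zeta>^n = 1"
    proof -
      have "\<zeta>^n = exp (of_nat n * (2 * pi * \<i> * of_nat m/of_nat n))" by (simp only: exp_of_nat_mult \<zeta>_def)
      also have "\<dots> = exp (of_nat m * (2 * of_real pi * \<i>))" using n by (simp add: field_simps)
      also have "\<dots> = 1" by (simp only: exp_of_nat_mult exp_two_pi_i power_one)
      finally show ?thesis .
    qed
    then show ?thesis using False z1 by (simp add: geometric_sum)
  qed
  finally show ?thesis .
qed
lemma tp: "tensor_power N q bs = (if length bs = N then q True ^ length (filter id bs) * q False ^ length (filter (\<lambda>b. \<not> b) bs) else 0)"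
proof -
  have "prod_list (map q bs) = q True ^ length (filter id bs) * q False ^ length (filter (\<lambda>b. \<not> b) bs)"
    by (induction bs) (auto simp: algebra_simps)
  thus ?thesis by (simp add: tensor_power_def)
qed

lemma part1:
  fixes N :: nat and z :: complex
  assumes "N \<ge> 4"
  shows "X_state N z =
           (\<lambda>bs. (1 / of_nat (N - 1)) *
              (\<Sum>k\<in>{1..N-1}. tensor_power N
                 (\<lambda>b. ket1 b + exp (2 * pi * \<i> * of_nat (k - 1) / of_nat (N - 1)) * z * ket0 b) bs))"
proof
  fix bs :: "bool list"
  show "X_state N z bs = (1 / of_nat (N - 1)) *
              (\<Sum>k\<in>{1..N-1}. tensor_power N
                 (\<lambda>b. ket1 b + exp (2 * pi * \<i> * of_nat (k - 1) / of_nat (N - 1)) * z * ket0 b) bs)"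
  proof (cases "length bs = N")
    case False
    then show ?thesis by (simp add: X_state_def tp W_state_def)
  next
    case True
    define m where "m = length (filter (\<lambda>b. \<not> b) bs)"
    have lid: "length (filter id bs) = N - m"
      using sum_length_filter_compl[of id bs] True by (simp add: m_def)
    have mN: "m \<le> N" using sum_length_filter_compl[of id bs] True by (simp add: m_def)
    have N1: "N - 1 \<ge> 1" using assms by simp
    have "(\<Sum>k\<in>{1..N-1}. tensor_power N
                 (\<lambda>b. ket1 b + exp (2 * pi * \<i> * of_nat (k - 1) / of_nat (N - 1)) * z * ket0 b) bs)
         = (\<Sum>k\<in>{1..N-1}. exp (2 * pi * \<i> * of_nat (k - 1) / of_nat (N - 1))^m) * z^m"
      by (simp add: tp True lid m_def[symmetric] ket0_def ket1_def sum_distrib_right power_mult_distrib)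
    also have "\<dots> = (if (N-1) dvd m then of_nat (N-1) else 0) * z^m"
      using root_sum[OF N1, of m] by simp
    finally have R: "(\<Sum>k\<in>{1..N-1}. tensor_power N
                 (\<lambda>b. ket1 b + exp (2 * pi * \<i> * of_nat (k - 1) / of_nat (N - 1)) * z * ket0 b) bs)
         = (if (N-1) dvd m then of_nat (N-1) else 0) * z^m" .
    have sN: "complex_of_real (sqrt (real N)) * complex_of_real (1 / sqrt (real N)) = 1"
      using assms by (simp flip: of_real_mult)
    have L: "X_state N z bs = (if m = 0 then 1 else 0) + (if m = N - 1 then z^(N-1) else 0)"
      using True lid assms sN by (auto simp: X_state_def tp W_state_def m_def[symmetric] ket1_def)
    have dv: "(N-1) dvd m \<longleftrightarrow> m = 0 \<or> m = N - 1"
    proof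
      assume "(N-1) dvd m"
      then obtain q where q: "m = (N-1)*q" by auto
      have "q < 2"
      proof (rule ccontr)
        assume "\<not> q < 2"
        hence "(N-1)*2 \<le> (N-1)*q" by simp
        thus False using q mN assms by linarith
      qed
      thus "m = 0 \<or> m = N - 1" using q by (cases q) auto
    qed auto
    show ?thesis using L R dv N1 assms by (auto simp: of_nat_diff)
  qed
qed

lemma lower:
  fixes N :: nat and z :: complex and x :: "nat \<Rightarrow> qubit"
  assumes N: "N \<ge> 4" and z: "z \<noteq> 0" and D: "D \<le> N - 2"
    and rep: "X_state N z = (\<lambda>bs. \<Sum>k\<in>{1..D}. tensor_power N (x k) bs)"
  shows False
proof -
  define c where "c m = X_state N z (replicate m False @ replicate (N-m) True)" for m
  have cval: "c m = (\<Sum>k\<in>{1..D}. x k False ^ m * x k True ^ (N-m))" if "m \<le> N" for m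
    using that unfolding c_def rep by (simp add: tp mult.commute)
  have c0: "c m = 0" if "1 \<le> m" "m \<le> N-2" for m
    using that N unfolding c_def by (simp add: X_state_def tp W_state_def ket1_def)
  have sN: "complex_of_real (sqrt (real N)) * complex_of_real (1 / sqrt (real N)) = 1"
    using N by (simp flip: of_real_mult)
  have c1: "c (N-1) = z^(N-1)"
    using N sN unfolding c_def by (simp add: X_state_def tp W_state_def ket1_def)
  define a where "a k = x k False" for k
  define b where "b k = x k True" for k
  define S where "S = {k\<in>{1..D}. b k \<noteq> 0}"
  define t where "t k = a k / b k" for k
  define P where "P = (\<Prod>k\<in>S. [:- t k, 1:])"
  define s where "s = card S"
  have finS: "finite S" by (simp add: S_def)
  have sD: "s \<le> D" unfolding s_def S_def by (metis (no_types, lifting) card_atLeastAtMost card_mono finite_atLeastAtMost mem_Collect_eq subsetI diff_Suc_1)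
  have key: "c m = (\<Sum>k\<in>S. b k ^ N * t k ^ m)" if "m \<le> N - 1" for m
  proof -
    have "c m = (\<Sum>k\<in>{1..D}. a k ^ m * b k ^ (N-m))" using that N by (simp add: cval a_def b_def)
    also have "\<dots> = (\<Sum>k\<in>S. a k ^ m * b k ^ (N-m))"
    proof -
      have Nm: "N - m \<noteq> 0" using that N by simp
      have zz: "a k ^ m * b k ^ (N-m) = 0" if "k \<in> {1..D} - S" for k
      proof -
        have "b k = 0" using that by (simp add: S_def)
        thus ?thesis using Nm by simp
      qed
      show ?thesis
        apply (rule sum.mono_neutral_right)
          apply (simp add: S_def)
         apply (auto simp: S_def)[1]
        using zz by blast
    qed
    also have "\<dots> = (\<Sum>k\<in>S. b k ^ N * t k ^ m)"
    proof (rule sum.cong)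
      fix k assume "k \<in> S"
      hence bk: "b k \<noteq> 0" by (simp add: S_def)
      have "b k ^ N = b k ^ m * b k ^ (N - m)" using that by (simp flip: power_add)
      thus "a k ^ m * b k ^ (N-m) = b k ^ N * t k ^ m" using bk by (simp add: t_def power_divide)
    qed simp
    finally show ?thesis .
  qed
  have degP: "degree P = s" unfolding P_def s_def
    by (subst degree_prod_eq_sum_degree) auto
  have lcP: "coeff P s = 1" using lead_coeff_prod[of "\<lambda>k. [:- t k, 1:]" S] degP unfolding P_def by simp
  have rootP: "poly P (t k) = 0" if "k \<in> S" for k
    unfolding P_def poly_prod using that finS by (auto intro: prod_zero)
  define i where "i = N - 1 - s"
  have i1: "i \<ge> 1" using sD D N by (simp add: i_def)
  have "0 = (\<Sum>k\<in>S. b k ^ N * t k ^ i * poly P (t k))" using rootP by simp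
  also have "\<dots> = (\<Sum>k\<in>S. b k ^ N * t k ^ i * (\<Sum>j\<le>s. coeff P j * t k ^ j))"
    by (simp add: poly_altdef degP)
  also have "\<dots> = (\<Sum>j\<le>s. coeff P j * (\<Sum>k\<in>S. b k ^ N * t k ^ (i + j)))"
    by (simp add: sum_distrib_left sum_distrib_right sum.swap[of _ "{..s}"] power_add algebra_simps)
  also have "\<dots> = (\<Sum>j\<le>s. coeff P j * c (i + j))"
    using sD D N by (intro sum.cong refl) (simp add: key i_def)
  also have "\<dots> = coeff P s * c (i + s) + (\<Sum>j<s. coeff P j * c (i + j))"
    by (simp add: lessThan_Suc_atMost[symmetric])
  also have "(\<Sum>j<s. coeff P j * c (i + j)) = 0"
    using i1 sD D N by (intro sum.neutral) (auto simp: c0 i_def)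
  also have "i + s = N - 1" using sD D N by (simp add: i_def)
  finally have "z ^ (N-1) = 0" using lcP c1 by simp
  thus False using z by simp
qed

theorem mainTheorem11:
  fixes N :: nat and z :: complex
  assumes "N \<ge> 4" and "z \<noteq> 0"
  shows "X_state N z =
           (\<lambda>bs. (1 / of_nat (N - 1)) *
              (\<Sum>k\<in>{1..N-1}. tensor_power N
                 (\<lambda>b. ket1 b + exp (2 * pi * \<i> * of_nat (k - 1) / of_nat (N - 1)) * z * ket0 b) bs))
         \<and> bond_dim N (X_state N z) = N - 1"
proof
  note P1 = part1[OF assms(1), of z]
  show "X_state N z =
           (\<lambda>bs. (1 / of_nat (N - 1)) *
              (\<Sum>k\<in>{1..N-1}. tensor_power N
                 (\<lambda>b. ket1 b + exp (2 * pi * \<i> * of_nat (k - 1) / of_nat (N - 1)) * z * ket0 b) bs))"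
    by (rule P1)
  define r where "r = complex_of_real (root N (1 / real (N - 1)))"
  have rN: "r ^ N = 1 / of_nat (N - 1)"
  proof -
    have "root N (1 / real (N - 1)) ^ N = 1 / real (N - 1)"
      using assms(1) by (intro real_root_pow_pos2) auto
    hence "r ^ N = complex_of_real (1 / real (N - 1))" unfolding r_def by (metis of_real_power)
    thus ?thesis using assms(1) by (simp add: of_nat_diff)
  qed
  define q where "q k = (\<lambda>b. ket1 b + exp (2 * pi * \<i> * of_nat (k - 1) / of_nat (N - 1)) * z * ket0 b)" for k :: nat
  define x where "x k = (\<lambda>b. r * q k b)" for k
  have tpx: "tensor_power N (x k) bs = r ^ N * tensor_power N (q k) bs" for k bs
  proof (cases "length bs = N")
    case True
    have "length (filter id bs) + length (filter (\<lambda>b. \<not> b) bs) = N"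
      using sum_length_filter_compl[of id bs] True by simp
    then show ?thesis using True
      by (auto simp: tp x_def power_mult_distrib algebra_simps simp flip: power_add)
  qed (simp add: tp)
  have rep: "X_state N z = (\<lambda>bs. \<Sum>k\<in>{1..N-1}. tensor_power N (x k) bs)"
    by (subst P1) (simp add: tpx rN q_def sum_distrib_left)
  show "bond_dim N (X_state N z) = N - 1"
    unfolding bond_dim_def
  proof (rule Least_equality)
    show "N - 1 \<ge> 1 \<and> (\<exists>x :: nat \<Rightarrow> qubit. X_state N z = (\<lambda>bs. \<Sum>k\<in>{1..N-1}. tensor_power N (x k) bs))"
      using rep assms(1) by auto
  next
    fix D assume "D \<ge> 1 \<and> (\<exists>x :: nat \<Rightarrow> qubit. X_state N z = (\<lambda>bs. \<Sum>k\<in>{1..D}. tensor_power N (x k) bs))"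
    then obtain y :: "nat \<Rightarrow> qubit" where y: "X_state N z = (\<lambda>bs. \<Sum>k\<in>{1..D}. tensor_power N (y k) bs)" by blast
    show "N - 1 \<le> D"
    proof (rule ccontr)
      assume "\<not> N - 1 \<le> D"
      hence "D \<le> N - 2" by simp
      from lower[OF assms(1) assms(2) this y] show False .
    qed
  qed
qed

end
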